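(* Let $X$ and $Q$ be defined as follows (indexed by layers $\ell\ge2$ and positions $0\le j\le n_\ell-1$, and ordered lexicographically in $(\ell,j)$, with $\vec q_0=\vec 0$ prepended to $Q$). Let $n_\ell:=\ell\lceil\ln^2\ell\rceil+1$, $\theta_\ell:=\frac{\pi}{2(n_\ell-1)}$, $\vec x_{\ell,j}:=(\cos(j\theta_\ell),\sin(j\theta_\ell))$ for even $\ell$ and $\vec x_{\ell,j}:=(\sin(j\theta_\ell),\cos(j\theta_\ell))$ for odd $\ell$. Let $\alpha:=\sum_{\ell=2}^\infty\frac1{\ell\ln^2\ell}$, $z_\ell:=\frac1\alpha\sum_{m=2}^\ell\frac1{m\ln^2 m}$ (so $z_1=0$), $\delta_\ell:=z_\ell-z_{\ell-1}=\frac{1}{\alpha\ell\ln^2\ell}$, $z_{\ell,j}:=1-\delta_\ell\cot((j+1)\theta_\ell)$ for $j<n_\ell-1$ and $z_{\ell,n_\ell-1}:=1$. For even $\ell$, $\vec q_{\ell,j}:=(z_\ell,z_{\ell,j})$; for odd $\ell$, $\vec q_{\ell,j}$ is any maximizer of $\vec x_{\ell,j}\cdot\vec q_{\ell',j'}$ over all $(\ell',j')$ with $\ell'<\ell$. Then $\mathrm{MenuGap}(X,Q)=\infty$.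
   Context: MenuGap: Let $X=(\vec x_i)_{i=1}^N$ be an ordered sequence of nonzero points of $\mathbb{R}^k_{\ge0}$ ($N$ finite or $+\infty$), and $Q=(\vec q_i)_{i=0}^N$ an ordered sequence of points of $[0,1]^k$ with $\vec q_0=(0,\dots,0)$. Define $\mathrm{gap}_i^{X,Q}:=\min_{0\le j<i}(\vec q_i-\vec q_j)\cdot\vec x_i$ and $\mathrm{MenuGap}(X,Q):=\sum_{i=1}^N \mathrm{gap}_i^{X,Q}/\|\vec x_i\|_1$. *)

theory Defs
  imports "HOL-Analysis.Analysis"
begin

definition norm1 :: "real^'k \<Rightarrow> real" where
  "norm1 x = (\<Sum>i\<in>UNIV. \<bar>x $ i\<bar>)"

definition gap :: "(nat \<Rightarrow> real^'k) \<Rightarrow> (nat \<Rightarrow> real^'k) \<Rightarrow> nat \<Rightarrow> real" where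
  "gap X Q i = Min {(Q i - Q j) \<bullet> X i | j. j < i}"

definition menugap_partial :: "(nat \<Rightarrow> real^'k) \<Rightarrow> (nat \<Rightarrow> real^'k) \<Rightarrow> nat \<Rightarrow> real" where
  "menugap_partial X Q N = (\<Sum>i\<in>{1..N}. gap X Q i / norm1 (X i))"

definition menugap_infinite :: "(nat \<Rightarrow> real^'k) \<Rightarrow> (nat \<Rightarrow> real^'k) \<Rightarrow> bool" where
  "menugap_infinite X Q \<longleftrightarrow> filterlim (menugap_partial X Q) at_top sequentially"

definition nl :: "nat \<Rightarrow> nat" where
  "nl l = l * nat \<lceil>(ln (real l))^2\<rceil> + 1"

definition theta :: "nat \<Rightarrow> real" where
  "theta l = pi / (2 * (real (nl l) - 1))"

definition xvec :: "nat \<Rightarrow> nat \<Rightarrow> real^2" where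
  "xvec l j = (if even l then vector [cos (real j * theta l), sin (real j * theta l)]
               else vector [sin (real j * theta l), cos (real j * theta l)])"

definition alpha :: real where
  "alpha = (\<Sum>m. 1 / (real (m + 2) * (ln (real (m + 2)))^2))"

definition zl :: "nat \<Rightarrow> real" where
  "zl l = (1 / alpha) * (\<Sum>m\<in>{2..l}. 1 / (real m * (ln (real m))^2))"

definition delta :: "nat \<Rightarrow> real" where
  "delta l = 1 / (alpha * real l * (ln (real l))^2)"

definition zlj :: "nat \<Rightarrow> nat \<Rightarrow> real" where
  "zlj l j = (if j < nl l - 1 then 1 - delta l * cot (real (j + 1) * theta l) else 1)"

definition qeven :: "nat \<Rightarrow> nat \<Rightarrow> real^2" where
  "qeven l j = vector [zl l, zlj l j]"

text \<open>Position of (l,j) in the lexicographic order, counting from 1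
  (index 0 is reserved for q_0 = 0).\<close>
definition pos :: "nat \<Rightarrow> nat \<Rightarrow> nat" where
  "pos l j = 1 + (\<Sum>m\<in>{2..<l}. nl m) + j"

end

theory Submission
  imports Defs
begin


lemma alpha_summable: "summable (\<lambda>m. 1 / (real (m + 2) * (ln (real (m + 2)))^2))"
proof -
  define f :: "nat \<Rightarrow> real" where "f n = 1 / (real (n+1) * (ln (real (n+1)))^2)" for n
  have mono: "f (Suc m) \<le> f m" if "0 < m" for m
  proof -
    have a: "0 < real (m+1) * (ln (real (m+1)))^2" using that by (simp)
    have "real (m+1) * (ln (real (m+1)))^2 \<le> real (Suc m + 1) * (ln (real (Suc m+1)))^2"
      using that by (intro mult_mono power_mono) auto
    then show ?thesis unfolding f_def using a by (intro divide_left_mono) auto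
  qed
  have nonneg: "f n \<ge> 0" for n unfolding f_def by simp
  have "summable (\<lambda>n. 2^n * f (2^n))"
  proof (rule summable_comparison_test_ev)
    show "summable (\<lambda>n. inverse ((ln 2)^2) * inverse (real n ^ 2))"
      by (intro summable_mult inverse_power_summable) simp
    show "eventually (\<lambda>n. norm (2^n * f (2^n)) \<le> inverse ((ln 2)^2) * inverse (real n ^ 2)) sequentially"
      using eventually_gt_at_top[of "0::nat"]
    proof eventually_elim
      case (elim n)
      have l: "ln (real (2^n)) = real n * ln 2" by (simp add: ln_realpow)
      have p: "0 < real n * ln 2" using elim by simp
      have "ln (real (2^n)) \<le> ln (real (2^n + 1))" by (rule ln_mono) auto
      hence lm: "(real n * ln 2)^2 \<le> (ln (real (2^n+1)))^2" using l p by (intro power_mono) auto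
      have "2^n * f (2^n) = real (2^n) / (real (2^n+1) * (ln (real (2^n+1)))^2)"
        unfolding f_def by simp
      also have "\<dots> \<le> real (2^n+1) / (real (2^n+1) * (ln (real (2^n+1)))^2)"
        using p lm by (intro divide_right_mono) auto
      also have "\<dots> = 1 / (ln (real (2^n+1)))^2" by simp
      also have "\<dots> \<le> 1 / (real n * ln 2)^2"
      proof -
        have q: "0 < (real n * ln 2)^2" using p elim by simp
        have q2: "0 < (ln (real (2^n+1)))^2" using q lm by linarith
        show ?thesis by (rule divide_left_mono[OF lm], simp, rule mult_pos_pos[OF q2 q])
      qed
      also have "\<dots> = inverse ((ln 2)^2) * inverse (real n ^ 2)"
        by (simp add: power_mult_distrib field_simps)
      finally show ?case using nonneg by simp
    qed
  qed
  hence "summable f" using condensation_test[of f] mono nonneg by blast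
  hence "summable (\<lambda>n. f (Suc n))" by (subst summable_Suc_iff)
  moreover have "(\<lambda>n. f (Suc n)) = (\<lambda>m. 1 / (real (m + 2) * (ln (real (m + 2)))^2))"
    unfolding f_def by (simp add: add.commute)
  ultimately show ?thesis by simp
qed

lemma alpha_pos: "alpha > 0"
  unfolding alpha_def
  by (rule suminf_pos[OF alpha_summable]) simp



lemma nl_ge: "2 \<le> l \<Longrightarrow> l + 1 \<le> nl l"
proof -
  assume l: "2 \<le> l"
  have "ln (real l) > 0" using l by simp
  hence "(ln (real l))^2 > 0" by simp
  hence "nat \<lceil>(ln (real l))^2\<rceil> \<ge> 1" by linarith
  thus ?thesis unfolding nl_def by simp
qed

lemma nl_real: "real (nl l - 1) = real l * real (nat \<lceil>(ln (real l))^2\<rceil>)"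
  unfolding nl_def by simp

lemma theta_pos: "2 \<le> l \<Longrightarrow> 0 < theta l"
  using nl_ge[of l] unfolding theta_def by (simp add: pi_gt_zero)

lemma theta_last: "2 \<le> l \<Longrightarrow> real (nl l - 1) * theta l = pi/2"
proof -
  assume "2 \<le> l"
  hence h: "real (nl l - 1) = real (nl l) - 1" "real (nl l) - 1 > 0" using nl_ge[of l] by (auto simp: of_nat_diff)
  show ?thesis unfolding theta_def h(1) using h(2) by (simp add: field_simps)
qed

lemma angle_range:
  assumes "2 \<le> l" "j \<le> nl l - 1"
  shows "0 \<le> real j * theta l" "real j * theta l \<le> pi/2"
proof -
  show "0 \<le> real j * theta l" using theta_pos[OF assms(1)] by simp
  have "real j * theta l \<le> real (nl l - 1) * theta l"
    using theta_pos[OF assms(1)] assms(2) by (intro mult_right_mono) auto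
  thus "real j * theta l \<le> pi/2" using theta_last[OF assms(1)] by simp
qed

lemma pos_eq: "pos l j = pos l 0 + j" unfolding pos_def by simp

lemma pos_Suc: "2 \<le> l \<Longrightarrow> pos (Suc l) 0 = pos l 0 + nl l"
  unfolding pos_def by simp

lemma pos_mono: "l \<le> l' \<Longrightarrow> pos l 0 \<le> pos l' 0"
  unfolding pos_def by (simp add: sum_mono2)

lemma pos_ge1: "1 \<le> pos l j" unfolding pos_def by simp

lemma pos_surj: "1 \<le> k \<Longrightarrow> \<exists>l j. 2 \<le> l \<and> j < nl l \<and> k = pos l j"
proof (induction k rule: nat_induct_at_least)
  case base
  have "1 = pos 2 0" unfolding pos_def by simp
  moreover have "0 < nl 2" unfolding nl_def by simp
  ultimately show ?case by blast
next
  case (Suc k)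
  then obtain l j where lj: "2 \<le> l" "j < nl l" "k = pos l j" by blast
  show ?case
  proof (cases "Suc j < nl l")
    case True
    have "Suc k = pos l (Suc j)" using lj unfolding pos_def by simp
    thus ?thesis using lj True by blast
  next
    case False
    hence "j = nl l - 1" using lj by simp
    hence "Suc k = pos (Suc l) 0" using lj nl_ge[of l] pos_Suc[of l] pos_eq[of l j] by simp
    moreover have "0 < nl (Suc l)" unfolding nl_def by simp
    ultimately show ?thesis using lj by (intro exI[of _ "Suc l"] exI[of _ 0]) auto
  qed
qed

lemma pos_less:
  assumes "2 \<le> l" "2 \<le> l'" "j < nl l" "j' < nl l'" "pos l' j' < pos l j"
  shows "l' < l \<or> (l' = l \<and> j' < j)"
proof -
  have "\<not> l < l'"
  proof
    assume "l < l'"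
    hence "pos (Suc l) 0 \<le> pos l' 0" by (intro pos_mono) simp
    thus False using assms pos_Suc[of l] pos_eq[of l j] pos_eq[of l' j'] by simp
  qed
  moreover have "l' = l \<Longrightarrow> j' < j" using assms pos_eq[of l j] pos_eq[of l j'] by simp
  ultimately show ?thesis by linarith
qed

lemma sum_split_nat: "(\<Sum>i\<in>{1..(N::nat)+n}. t i :: real) = (\<Sum>i\<in>{1..N}. t i) + (\<Sum>j<n. t (N+1+j))"
  by (induction n) (simp_all add: add.commute)

lemma partial_layers:
  assumes "2 \<le> l"
  shows "(\<Sum>i\<in>{1..pos l 0 - 1}. t i) = (\<Sum>m\<in>{2..<l}. \<Sum>j<nl m. t (pos m j) :: real)"
  using assms
proof (induction l rule: nat_induct_at_least)
  case base
  then show ?case unfolding pos_def by simp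
next
  case (Suc l)
  have e: "pos (Suc l) 0 - 1 = (pos l 0 - 1) + nl l" using pos_Suc[OF Suc(1)] pos_ge1[of l 0] by simp
  have p: "pos l j = (pos l 0 - 1) + 1 + j" for j using pos_eq[of l j] pos_ge1[of l 0] by simp
  have s: "(\<Sum>j<nl l. t (pos l j)) = (\<Sum>j<nl l. t ((pos l 0 - 1) + 1 + j))"
    by (intro sum.cong refl arg_cong[where f=t] p)
  show ?case unfolding e sum_split_nat Suc(2) using Suc(1) s
    by (simp add: atLeastLessThanSuc ac_simps)
qed



lemma zl_nonneg: "0 \<le> zl l"
  unfolding zl_def using alpha_pos by (intro mult_nonneg_nonneg sum_nonneg) auto

lemma zl_mono: "l \<le> l' \<Longrightarrow> zl l \<le> zl l'"
  unfolding zl_def using alpha_pos by (intro mult_left_mono sum_mono2) auto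

lemma zl_diff: "2 \<le> l \<Longrightarrow> zl l - zl (l - 1) = delta l"
proof -
  assume l: "2 \<le> l"
  have "{2..l} = insert l {2..l-1}" using l by auto
  hence "(\<Sum>m\<in>{2..l}. 1 / (real m * (ln (real m))^2)) =
         1 / (real l * (ln (real l))^2) + (\<Sum>m\<in>{2..l-1}. 1 / (real m * (ln (real m))^2))"
    using l by (simp only:) (subst sum.insert, auto)
  thus ?thesis unfolding zl_def delta_def by (simp add: algebra_simps)
qed

lemma delta_pos: "2 \<le> l \<Longrightarrow> 0 < delta l"
  unfolding delta_def using alpha_pos by simp

lemma inner2: "(a::real^2) \<bullet> b = a$1*b$1 + a$2*b$2"
  unfolding inner_vec_def sum_2 by simp

lemma xvec_even: "even l \<Longrightarrow> xvec l j $ 1 = cos (real j * theta l) \<and> xvec l j $ 2 = sin (real j * theta l)"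
  unfolding xvec_def by simp

lemma xvec_odd: "odd l \<Longrightarrow> xvec l j $ 1 = sin (real j * theta l) \<and> xvec l j $ 2 = cos (real j * theta l)"
  unfolding xvec_def by simp

lemma qeven_comp: "qeven l j $ 1 = zl l" "qeven l j $ 2 = zlj l j"
  unfolding qeven_def by simp_all

lemma sin_mult_abs: "\<bar>sin (real k * x)\<bar> \<le> real k * \<bar>sin x\<bar>"
proof (induction k)
  case 0 then show ?case by simp
next
  case (Suc k)
  have "sin (real (Suc k) * x) = sin (real k * x) * cos x + cos (real k * x) * sin x"
    by (simp add: distrib_right sin_add)
  also have "\<bar>\<dots>\<bar> \<le> \<bar>sin (real k * x)\<bar> * \<bar>cos x\<bar> + \<bar>cos (real k * x)\<bar> * \<bar>sin x\<bar>"
    by (metis abs_mult abs_triangle_ineq)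
  also have "\<dots> \<le> \<bar>sin (real k * x)\<bar> + \<bar>sin x\<bar>"
    by (intro add_mono) (auto intro: mult_left_le mult_left_le_one_le)
  finally show ?case using Suc by (simp add: distrib_right)
qed

lemma sin_pos_range: "0 < x \<Longrightarrow> x \<le> pi/2 \<Longrightarrow> 0 < sin x"
  by (intro sin_gt_zero) (auto simp: pi_gt_zero)

lemma cos_nonneg_range: "0 \<le> x \<Longrightarrow> x \<le> pi/2 \<Longrightarrow> 0 \<le> cos x"
  by (intro cos_ge_zero) auto

lemma sin_nonneg_range: "0 \<le> x \<Longrightarrow> x \<le> pi/2 \<Longrightarrow> 0 \<le> sin x"
  by (intro sin_ge_zero) auto

lemma cot_anti: "0 < a \<Longrightarrow> a \<le> b \<Longrightarrow> b \<le> pi/2 \<Longrightarrow> cot b \<le> cot a"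
proof -
  assume h: "0 < a" "a \<le> b" "b \<le> pi/2"
  have sa: "0 < sin a" "0 < sin b" using h sin_pos_range by auto
  have "sin a \<le> sin b" using h by (intro sin_monotone_2pi_le) auto
  moreover have "cos b \<le> cos a" using h by (intro cos_monotone_0_pi_le) auto
  moreover have "0 \<le> cos b" using h by (intro cos_nonneg_range) auto
  ultimately show ?thesis unfolding cot_def using sa
    by (simp add: divide_simps) (meson mult_mono order_trans mult_left_mono less_imp_le)
qed

lemma cot_nonneg: "0 < a \<Longrightarrow> a \<le> pi/2 \<Longrightarrow> 0 \<le> cot a"
  unfolding cot_def by (intro divide_nonneg_pos cos_nonneg_range sin_pos_range) auto

lemma zlj_le1: "2 \<le> l \<Longrightarrow> zlj l j \<le> 1"
proof -
  assume l: "2 \<le> l"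
  show ?thesis
  proof (cases "j < nl l - 1")
    case True
    have "0 < real (j+1) * theta l" using theta_pos[OF l] by simp
    moreover have "real (j+1) * theta l \<le> pi/2" using angle_range(2)[OF l, of "j+1"] True by simp
    ultimately have "0 \<le> cot (real (j+1) * theta l)" by (rule cot_nonneg)
    thus ?thesis unfolding zlj_def using True delta_pos[OF l] by simp
  qed (simp add: zlj_def)
qed

lemma key_identity:
  fixes b t :: real
  assumes "0 < sin (b + t)"
  shows "cos b - cot (b + t) * sin b = sin t / sin (b + t)"
proof -
  have e: "cos b * sin (b + t) - cos (b + t) * sin b = sin t"
    using sin_diff[of "b+t" b] by (simp add: mult.commute)
  have 1: "cos b = cos b * sin (b+t) / sin (b+t)" using assms by auto
  have 2: "cot (b+t) * sin b = cos (b+t) * sin b / sin (b+t)" by (simp add: cot_def)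
  have 3: "(cos b * sin (b + t) - cos (b + t) * sin b) / sin (b+t) = cos b * sin (b+t)/sin(b+t) - cos (b + t) * sin b / sin (b+t)"
    by (rule diff_divide_distrib)
  have "cos b - cot (b+t) * sin b = (cos b * sin (b + t) - cos (b + t) * sin b) / sin (b+t)"
    using 1 2 3 by linarith
  thus ?thesis using e by simp
qed

lemma ratio_bound:
  fixes t :: real
  assumes "0 < sin (real k * t)" "0 < k" "0 \<le> sin t"
  shows "1 / real k \<le> sin t / sin (real k * t)"
proof -
  have "sin (real k * t) \<le> real k * sin t" using sin_mult_abs[of k t] assms by simp
  thus ?thesis using assms by (simp add: divide_simps mult.commute)
qed



lemma lnln_step:
  fixes x :: real assumes x: "2 \<le> x"
  shows "ln (ln (x+2)) - ln (ln x) \<le> 2 / (x * ln x)"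
proof -
  have lx: "0 < ln x" using x by simp
  have "x + 2 = x * (1 + 2/x)" using x by (simp add: field_simps)
  moreover have "0 < 1 + 2/x" using x by (intro add_pos_nonneg) auto
  ultimately have "ln (x+2) = ln x + ln (1 + 2/x)" using x by (simp add: ln_mult)
  also have "ln (1 + 2/x) \<le> 2/x" using x by (intro ln_add_one_self_le_self) simp
  finally have a: "ln (x+2) \<le> ln x + 2/x" by simp
  have b: "0 < ln (x+2)" using x by simp
  have "ln (ln (x+2)) \<le> ln (ln x + 2/x)" using a b by (intro ln_mono) auto
  also have "ln x + 2/x = ln x * (1 + 2/(x * ln x))" using x lx by (simp add: field_simps)
  also have "ln (ln x * (1 + 2/(x * ln x))) = ln (ln x) + ln (1 + 2/(x * ln x))"
  proof -
    have "0 < 1 + 2/(x * ln x)" using x lx by (intro add_pos_nonneg) auto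
    thus ?thesis using lx by (simp add: ln_mult)
  qed
  also have "ln (1 + 2/(x * ln x)) \<le> 2/(x * ln x)" using x lx by (intro ln_add_one_self_le_self) simp
  finally show ?thesis by simp
qed

definition fev :: "nat \<Rightarrow> real" where
  "fev m = (if even m then 1 / (real m * ln (real m)) else 0)"

lemma fev_sum: "(\<Sum>m\<in>{2..<2*K+2}. fev m) \<ge> (ln (ln (real (2*K+2))) - ln (ln 2)) / 2"
proof (induction K)
  case 0 then show ?case by simp
next
  case (Suc K)
  have set: "{2..<2*Suc K+2} = insert (2*K+3) (insert (2*K+2) {2..<2*K+2})" by auto
  have "(\<Sum>m\<in>{2..<2*Suc K+2}. fev m) = fev (2*K+3) + fev (2*K+2) + (\<Sum>m\<in>{2..<2*K+2}. fev m)"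
    unfolding set by simp
  also have "fev (2*K+3) = 0" unfolding fev_def by simp
  also have "fev (2*K+2) = 1 / (real (2*K+2) * ln (real (2*K+2)))" unfolding fev_def by simp
  finally have e: "(\<Sum>m\<in>{2..<2*Suc K+2}. fev m) = 1 / (real (2*K+2) * ln (real (2*K+2))) + (\<Sum>m\<in>{2..<2*K+2}. fev m)"
    by simp
  have st: "ln (ln (real (2*K+2) + 2)) - ln (ln (real (2*K+2))) \<le> 2 / (real (2*K+2) * ln (real (2*K+2)))"
    by (rule lnln_step) simp
  have r: "real (2 * Suc K + 2) = real (2*K+2) + 2" by simp
  show ?case unfolding e r using Suc st by (simp add: field_simps)
qed

lemma lnln_unbounded: "\<exists>K. B \<le> (ln (ln (real (2*K+2))) - ln (ln 2)) / 2"
proof -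
  define y where "y = 2*B + ln (ln 2)"
  obtain K :: nat where K: "exp (exp y) \<le> real K" using real_arch_simple by blast
  have "exp (exp y) \<le> real (2*K+2)" using K by simp
  hence "ln (exp (exp y)) \<le> ln (real (2*K+2))" by (intro ln_mono) auto
  hence "exp y \<le> ln (real (2*K+2))" by simp
  hence "ln (exp y) \<le> ln (ln (real (2*K+2)))" by (intro ln_mono) auto
  hence "y \<le> ln (ln (real (2*K+2)))" by simp
  thus ?thesis unfolding y_def by (intro exI[of _ K]) simp
qed



lemma gap_lower:
  fixes X Q :: "nat \<Rightarrow> real^'k"
  assumes "0 < i" "\<And>j. j < i \<Longrightarrow> b \<le> (Q i - Q j) \<bullet> X i"
  shows "b \<le> gap X Q i"
proof -
  have e: "{(Q i - Q j) \<bullet> X i | j. j < i} = (\<lambda>j. (Q i - Q j) \<bullet> X i) ` {..<i}" by auto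
  show ?thesis unfolding gap_def e using assms by (subst Min_ge_iff) auto
qed

lemma norm1_2: "norm1 (x::real^2) = \<bar>x$1\<bar> + \<bar>x$2\<bar>"
  unfolding norm1_def sum_2 by simp

lemma norm1_xvec:
  "0 < norm1 (xvec l j) \<and> norm1 (xvec l j) \<le> 2"
proof -
  define a where "a = real j * theta l"
  have n: "norm1 (xvec l j) = \<bar>cos a\<bar> + \<bar>sin a\<bar>"
    unfolding norm1_2 a_def using xvec_even[of l j] xvec_odd[of l j] by (cases "even l") auto
  have "\<bar>cos a\<bar> * \<bar>cos a\<bar> \<le> \<bar>cos a\<bar> * 1" by (rule mult_left_mono) auto
  hence "cos a ^ 2 \<le> \<bar>cos a\<bar>" by (simp add: power2_eq_square)
  moreover have "\<bar>sin a\<bar> * \<bar>sin a\<bar> \<le> \<bar>sin a\<bar> * 1" by (rule mult_left_mono) auto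
  hence "sin a ^ 2 \<le> \<bar>sin a\<bar>" by (simp add: power2_eq_square)
  moreover have "sin a ^ 2 + cos a ^ 2 = 1" by simp
  moreover have "\<bar>cos a\<bar> \<le> 1" "\<bar>sin a\<bar> \<le> 1" by auto
  ultimately show ?thesis unfolding n by linarith
qed

lemma even_main_bound:
  assumes l: "2 \<le> l" and j: "j < nl l - 1" and j0: "0 < j \<or> True"
  shows "delta l / real (j+1) \<le> delta l * (cos (real j * theta l) - cot (real (j+1) * theta l) * sin (real j * theta l))"
proof -
  have th: "0 < theta l" by (rule theta_pos[OF l])
  have r1: "0 < real (j+1) * theta l" using th by simp
  have r2: "real (j+1) * theta l \<le> pi/2" using angle_range(2)[OF l, of "j+1"] j by simp
  have sp: "0 < sin (real (j+1) * theta l)" using r1 r2 by (rule sin_pos_range)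
  have eq: "real (j+1) * theta l = real j * theta l + theta l" by (simp add: distrib_right)
  have "cos (real j * theta l) - cot (real (j+1) * theta l) * sin (real j * theta l) = sin (theta l) / sin (real (j+1) * theta l)"
    unfolding eq by (rule key_identity) (use sp eq in simp)
  moreover have "1 / real (j+1) \<le> sin (theta l) / sin (real (j+1) * theta l)"
  proof (rule ratio_bound)
    show "0 < sin (real (j + 1) * theta l)" by (rule sp)
    show "0 < j + 1" by simp
    have "theta l \<le> pi/2" using angle_range(2)[OF l, of 1] j by simp
    thus "0 \<le> sin (theta l)" using th by (intro sin_nonneg_range) auto
  qed
  ultimately have "delta l * (1 / real (j+1)) \<le> delta l * (cos (real j * theta l) - cot (real (j+1) * theta l) * sin (real j * theta l))"
    using delta_pos[OF l] by (intro mult_left_mono) auto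
  thus ?thesis by simp
qed



theorem proposition5p8:
  fixes X Q :: "nat \<Rightarrow> real^2"
  assumes X_def: "\<forall>l\<ge>2. \<forall>j<nl l. X (pos l j) = xvec l j"
    and Q0: "Q 0 = 0"
    and Q_even: "\<forall>l\<ge>2. even l \<longrightarrow> (\<forall>j<nl l. Q (pos l j) = qeven l j)"
    and Q_odd_mem: "\<forall>l\<ge>2. odd l \<longrightarrow> (\<forall>j<nl l.
           (\<exists>l' j'. 2 \<le> l' \<and> l' < l \<and> j' < nl l' \<and> Q (pos l j) = Q (pos l' j')))"
    and Q_odd_max: "\<forall>l\<ge>2. odd l \<longrightarrow> (\<forall>j<nl l. \<forall>l' j'. 2 \<le> l' \<and> l' < l \<and> j' < nl l' \<longrightarrow>
           xvec l j \<bullet> Q (pos l' j') \<le> xvec l j \<bullet> Q (pos l j))"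
  shows "menugap_infinite X Q"
proof -
  define t where "t i = gap X Q i / norm1 (X i)" for i
  have earlier: "k = 0 \<or> (\<exists>l' j'. 2 \<le> l' \<and> l' < l \<and> j' < nl l' \<and> k = pos l' j') \<or> (\<exists>j'<j. k = pos l j')"
    if "2 \<le> l" "j < nl l" "k < pos l j" for l j k
  proof (cases "k = 0")
    case False
    then obtain l' j' where lj: "2 \<le> l'" "j' < nl l'" "k = pos l' j'" using pos_surj[of k] by auto
    hence "l' < l \<or> (l' = l \<and> j' < j)" using pos_less[of l l' j j'] that by simp
    thus ?thesis using lj by blast
  qed simp
  have coord: "\<forall>j. 2 \<le> l \<longrightarrow> j < nl l \<longrightarrow> Q (pos l j) $ 1 \<le> zl l \<and> Q (pos l j) $ 2 \<le> 1" for l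
  proof (induction l rule: less_induct)
    case (less l)
    show ?case
    proof (intro allI impI)
      fix j assume l: "2 \<le> l" and j: "j < nl l"
      show "Q (pos l j) $ 1 \<le> zl l \<and> Q (pos l j) $ 2 \<le> 1"
      proof (cases "even l")
        case True
        thus ?thesis using Q_even l j qeven_comp[of l j] zlj_le1[OF l, of j] by simp
      next
        case False
        then obtain l' j' where lj: "2 \<le> l'" "l' < l" "j' < nl l'" "Q (pos l j) = Q (pos l' j')"
          using Q_odd_mem l j by blast
        have "Q (pos l' j') $ 1 \<le> zl l' \<and> Q (pos l' j') $ 2 \<le> 1" using less(1)[OF lj(2)] lj by blast
        moreover have "zl l' \<le> zl l" using lj by (intro zl_mono) simp
        ultimately show ?thesis using lj(4) by simp
      qed
    qed
  qed
  have xnn: "0 \<le> xvec l j $ 1 \<and> 0 \<le> xvec l j $ 2" if "2 \<le> l" "j < nl l" for l j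
  proof -
    have a: "0 \<le> real j * theta l" "real j * theta l \<le> pi/2" using angle_range[OF that(1), of j] that(2) by auto
    have "0 \<le> cos (real j * theta l)" "0 \<le> sin (real j * theta l)"
      using cos_nonneg_range[OF a] sin_nonneg_range[OF a] by auto
    thus ?thesis using xvec_even[of l j] xvec_odd[of l j] by (cases "even l") auto
  qed
  have odd_gap: "0 \<le> gap X Q (pos l j)" if l: "2 \<le> l" "odd l" and j: "j < nl l" for l j
  proof (rule gap_lower)
    show "0 < pos l j" using pos_ge1[of l j] by simp
    fix k assume k: "k < pos l j"
    have X: "X (pos l j) = xvec l j" using X_def l j by blast
    have maxv: "xvec l j \<bullet> Q (pos l' j') \<le> xvec l j \<bullet> Q (pos l j)" if "2 \<le> l'" "l' < l" "j' < nl l'" for l' j'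
      using Q_odd_max l j that by blast
    have "xvec l j \<bullet> Q k \<le> xvec l j \<bullet> Q (pos l j)"
      using earlier[OF l(1) j k]
    proof (elim disjE exE conjE)
      assume "k = 0"
      have l3: "2 < l" using l by (cases "l = 2") auto
      have n2: "nl 2 - 1 < nl 2" using nl_ge[of 2] by simp
      have "Q (pos 2 (nl 2 - 1)) = qeven 2 (nl 2 - 1)" using Q_even n2 by simp
      hence qc: "Q (pos 2 (nl 2 - 1)) $ 1 = zl 2" "Q (pos 2 (nl 2 - 1)) $ 2 = 1"
        by (simp_all add: qeven_comp zlj_def)
      have "0 \<le> xvec l j \<bullet> Q (pos 2 (nl 2 - 1))"
        unfolding inner2 qc using xnn[OF l(1) j] zl_nonneg[of 2] by simp
      also have "\<dots> \<le> xvec l j \<bullet> Q (pos l j)" using maxv[of 2 "nl 2 - 1"] l3 n2 by simp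
      finally show ?thesis using \<open>k = 0\<close> Q0 by simp
    next
      fix l' j' assume "2 \<le> l'" "l' < l" "j' < nl l'" "k = pos l' j'"
      thus ?thesis using maxv by simp
    next
      fix j' assume "j' < j" "k = pos l j'"
      then obtain l'' j'' where "2 \<le> l''" "l'' < l" "j'' < nl l''" "Q k = Q (pos l'' j'')"
        using Q_odd_mem l j by (meson order.strict_trans)
      thus ?thesis using maxv by simp
    qed
    thus "0 \<le> (Q (pos l j) - Q k) \<bullet> X (pos l j)" unfolding X by (simp add: inner_diff_left inner_commute[of "xvec l j"])
  qed
  define bnd where "bnd l j = (if j < nl l - 1 then delta l / real (j+1) else 0)" for l j
  have even_gap: "bnd l j \<le> gap X Q (pos l j)" if l: "2 \<le> l" "even l" and j: "j < nl l" for l j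
  proof (rule gap_lower)
    show "0 < pos l j" using pos_ge1[of l j] by simp
    define c where "c = cos (real j * theta l)"
    define s where "s = sin (real j * theta l)"
    define E where "E = delta l * (c - cot (real (j+1) * theta l) * s)"
    have X: "X (pos l j) = xvec l j" using X_def l j by blast
    have xc: "xvec l j $ 1 = c" "xvec l j $ 2 = s" using xvec_even[OF l(2)] unfolding c_def s_def by auto
    have cs: "0 \<le> c" "0 \<le> s" using xnn[OF l(1) j] xc by auto
    have Qi: "Q (pos l j) = qeven l j" using Q_even l j by blast
    have dp: "0 < delta l" by (rule delta_pos[OF l(1)])
    have bE: "j < nl l - 1 \<Longrightarrow> bnd l j \<le> E" unfolding bnd_def E_def c_def s_def
      using even_main_bound[OF l(1)] by simp
    have b0: "\<not> j < nl l - 1 \<Longrightarrow> bnd l j = 0" unfolding bnd_def by simp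
    have zlast: "\<not> j < nl l - 1 \<Longrightarrow> zlj l j = 1" unfolding zlj_def by simp
    have zmid: "j < nl l - 1 \<Longrightarrow> zlj l j = 1 - delta l * cot (real (j+1) * theta l)" unfolding zlj_def by simp
    fix k assume k: "k < pos l j"
    have "bnd l j \<le> (qeven l j - Q k) \<bullet> xvec l j"
    proof (cases "(\<exists>j'<j. k = pos l j')")
      case False
      hence pb: "Q k $ 1 \<le> zl (l-1) \<and> Q k $ 2 \<le> 1"
      proof -
        from earlier[OF l(1) j k] False consider "k = 0" | l' j' where "2 \<le> l'" "l' < l" "j' < nl l'" "k = pos l' j'"
          by blast
        thus ?thesis
        proof cases
          case 1 thus ?thesis using Q0 zl_nonneg[of "l-1"] by simp
        next
          case 2
          hence "Q k $ 1 \<le> zl l' \<and> Q k $ 2 \<le> 1" using coord[of l'] by blast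
          moreover have "zl l' \<le> zl (l-1)" using 2 by (intro zl_mono) simp
          ultimately show ?thesis by simp
        qed
      qed
      have d: "zl l - zl (l-1) = delta l" by (rule zl_diff[OF l(1)])
      have "delta l * c + (zlj l j - 1) * s \<le> (qeven l j - Q k) \<bullet> xvec l j"
        unfolding inner2 xc qeven_comp vector_minus_component
        using pb cs d by (intro add_mono mult_right_mono) auto
      moreover have "bnd l j \<le> delta l * c + (zlj l j - 1) * s"
      proof (cases "j < nl l - 1")
        case True
        have "delta l * c + (zlj l j - 1) * s = E" unfolding E_def zmid[OF True] by (simp add: algebra_simps)
        thus ?thesis using bE[OF True] by simp
      next
        case False thus ?thesis using b0 zlast dp cs by simp
      qed
      ultimately show ?thesis by linarith
    next
      case True
      then obtain j' where j': "j' < j" "k = pos l j'" by blast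
      have Qk: "Q k = qeven l j'" using Q_even l j j' by simp
      have inn: "(qeven l j - Q k) \<bullet> xvec l j = (zlj l j - zlj l j') * s"
        unfolding Qk inner2 xc qeven_comp vector_minus_component by simp
      show ?thesis
      proof (cases "j < nl l - 1")
        case False
        thus ?thesis unfolding inn using b0 zlast zlj_le1[OF l(1), of j'] cs by simp
      next
        case True
        have th: "0 < theta l" by (rule theta_pos[OF l(1)])
        have j'm: "j' < nl l - 1" using True j' by simp
        have a1: "0 < real (j'+1) * theta l" using th by simp
        have a2: "real (j'+1) * theta l \<le> real j * theta l" using th j' by (intro mult_right_mono) auto
        have a3: "real j * theta l \<le> pi/2" using angle_range(2)[OF l(1), of j] True by simp
        have ct: "cot (real j * theta l) \<le> cot (real (j'+1) * theta l)" by (rule cot_anti[OF a1 a2 a3])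
        have spos: "0 < s" unfolding s_def using a1 a2 a3 by (intro sin_pos_range) auto
        have cots: "cot (real j * theta l) * s = c" unfolding cot_def c_def s_def using spos s_def by simp
        have "E = delta l * (cot (real j * theta l) - cot (real (j+1) * theta l)) * s"
          unfolding E_def using cots by (simp add: algebra_simps)
        also have "\<dots> \<le> delta l * (cot (real (j'+1) * theta l) - cot (real (j+1) * theta l)) * s"
          using ct dp cs by (intro mult_right_mono mult_left_mono) auto
        also have "\<dots> = (zlj l j - zlj l j') * s"
        proof -
          have zj': "zlj l j' = 1 - delta l * cot (real (j'+1) * theta l)" unfolding zlj_def using j'm by simp
          show ?thesis unfolding zmid[OF True] zj' by (simp add: algebra_simps)
        qed
        finally show ?thesis unfolding inn using bE[OF True] by simp
      qed
    qed
    thus "bnd l j \<le> (Q (pos l j) - Q k) \<bullet> X (pos l j)" unfolding X Qi .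
  qed
  have bnd_nn: "0 \<le> bnd l j" if "2 \<le> l" for l j unfolding bnd_def using delta_pos[OF that] by simp
  have t_nn: "0 \<le> t i" if i1: "1 \<le> i" for i
  proof -
    obtain l j where lj: "2 \<le> l" "j < nl l" "i = pos l j" using pos_surj[OF i1] by blast
    have "0 \<le> gap X Q i"
    proof (cases "even l")
      case True
      thus ?thesis using lj(3) even_gap[OF lj(1) True lj(2)] bnd_nn[OF lj(1), of j] by simp
    next
      case False
      thus ?thesis using lj(3) odd_gap[OF lj(1) False lj(2)] by simp
    qed
    moreover have "0 \<le> norm1 (X i)" unfolding norm1_def by (simp add: sum_nonneg)
    ultimately show ?thesis unfolding t_def by simp
  qed
  have t_even: "bnd l j / 2 \<le> t (pos l j)" if l: "2 \<le> l" "even l" and j: "j < nl l" for l j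
  proof -
    have X: "X (pos l j) = xvec l j" using X_def l j by blast
    have n: "0 < norm1 (xvec l j)" "norm1 (xvec l j) \<le> 2" using norm1_xvec by auto
    have g: "bnd l j \<le> gap X Q (pos l j)" by (rule even_gap[OF l j])
    have "bnd l j / 2 \<le> gap X Q (pos l j) / 2" using g by simp
    also have "\<dots> \<le> gap X Q (pos l j) / norm1 (xvec l j)"
      using n g bnd_nn[OF l(1), of j] by (intro divide_left_mono) auto
    finally show ?thesis unfolding t_def X .
  qed
  have layer: "fev m / (2 * alpha) \<le> (\<Sum>j<nl m. t (pos m j))" if m: "2 \<le> m" for m
  proof (cases "even m")
    case False
    have "0 \<le> (\<Sum>j<nl m. t (pos m j))" using t_nn pos_ge1 by (intro sum_nonneg) auto
    thus ?thesis unfolding fev_def using False by simp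
  next
    case True
    have lnm: "0 < ln (real m)" using m by simp
    have "fev m / (2 * alpha) = delta m / 2 * ln (real m)"
    proof -
      have l: "ln (real m) \<noteq> 0" "real m \<noteq> 0" "alpha \<noteq> 0" using m lnm alpha_pos by auto
      have "fev m = 1 / (real m * ln (real m))" unfolding fev_def using True by simp
      thus ?thesis unfolding delta_def using l by (simp add: power2_eq_square field_simps)
    qed
    also have "\<dots> \<le> delta m / 2 * ln (real (nl m - 1) + 1)"
    proof -
      have "real m \<le> real (nl m - 1) + 1" using nl_ge[OF m] by simp
      hence "ln (real m) \<le> ln (real (nl m - 1) + 1)" using m by (intro ln_mono) auto
      thus ?thesis using delta_pos[OF m] by (intro mult_left_mono) auto
    qed
    also have "\<dots> \<le> delta m / 2 * harm (nl m - 1)"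
      using ln_le_harm[of "nl m - 1"] delta_pos[OF m] by (intro mult_left_mono) auto
    also have "\<dots> = (\<Sum>j<nl m - 1. bnd m j / 2)"
    proof -
      have "(\<Sum>j<nl m - 1. bnd m j / 2) = (\<Sum>j<nl m - 1. delta m / 2 * inverse (real (Suc j)))"
      proof (rule sum.cong[OF refl])
        fix j assume "j \<in> {..<nl m - 1}"
        hence "bnd m j = delta m / real (j+1)" unfolding bnd_def by simp
        thus "bnd m j / 2 = delta m / 2 * inverse (real (Suc j))" by (simp add: field_simps)
      qed
      moreover have "delta m / 2 * harm (nl m - 1) = (\<Sum>j<nl m - 1. delta m / 2 * inverse (real (Suc j)))"
        unfolding harm_altdef by (rule sum_distrib_left)
      ultimately show ?thesis by simp
    qed
    also have "\<dots> \<le> (\<Sum>j<nl m - 1. t (pos m j))"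
      using t_even[OF m True] by (intro sum_mono) auto
    also have "\<dots> \<le> (\<Sum>j<nl m. t (pos m j))"
      using t_nn pos_ge1 by (intro sum_mono2) auto
    finally show ?thesis .
  qed
  have ps: "menugap_partial X Q N = (\<Sum>i\<in>{1..N}. t i)" for N
    unfolding menugap_partial_def t_def by simp
  have mono: "menugap_partial X Q N \<le> menugap_partial X Q N'" if "N \<le> N'" for N N'
    unfolding ps using that t_nn by (intro sum_mono2) auto
  have atl: "(\<Sum>m\<in>{2..<l}. fev m) / (2 * alpha) \<le> menugap_partial X Q (pos l 0 - 1)" if "2 \<le> l" for l
  proof -
    have "(\<Sum>m\<in>{2..<l}. fev m) / (2 * alpha) = (\<Sum>m\<in>{2..<l}. fev m / (2 * alpha))"
      by (simp add: sum_divide_distrib)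
    also have "\<dots> \<le> (\<Sum>m\<in>{2..<l}. \<Sum>j<nl m. t (pos m j))"
      using layer by (intro sum_mono) auto
    also have "\<dots> = menugap_partial X Q (pos l 0 - 1)"
      unfolding ps using partial_layers[OF that, of t] by simp
    finally show ?thesis .
  qed
  show ?thesis
    unfolding menugap_infinite_def filterlim_at_top
  proof
    fix Z :: real
    obtain K where K: "2 * alpha * Z \<le> (ln (ln (real (2*K+2))) - ln (ln 2)) / 2"
      using lnln_unbounded by blast
    have "2 * alpha * Z \<le> (\<Sum>m\<in>{2..<2*K+2}. fev m)" using K fev_sum[of K] by linarith
    hence "Z \<le> (\<Sum>m\<in>{2..<2*K+2}. fev m) / (2 * alpha)" using alpha_pos by (simp add: field_simps)
    also have "\<dots> \<le> menugap_partial X Q (pos (2*K+2) 0 - 1)" by (rule atl) simp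
    finally have Z0: "Z \<le> menugap_partial X Q (pos (2*K+2) 0 - 1)" .
    show "eventually (\<lambda>N. Z \<le> menugap_partial X Q N) sequentially"
      using eventually_ge_at_top[of "pos (2*K+2) 0 - 1"]
      by eventually_elim (rule order.trans[OF Z0 mono])
  qed
qed

end
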